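(* Let $\Sigma$ be a set with at least two elements, $\mathcal{L}=2^\Sigma$ the powerset lattice, and $r_0\in\Sigma$. Let $R:=\bigcup\{\{r\}\times(\Sigma\setminus\{r\})\,;\,r\in\Sigma\}$ and $S:=R\cup(\{r_0\}\times\Sigma)$. Then $R,S\in\Sigma'_\circledast$ (for $\mathcal{L}_1=\mathcal{L}_2=\mathcal{L}$), and $R\subsetneqq S\subsetneqq\Sigma\times\Sigma$. Consequently there is no complete atomistic coatomistic lattice $\mathcal{L}_0$ with $\mathcal{F}(\mathcal{L}_0)\cong\mathcal{F}(\mathcal{L})\otimes_C\mathcal{F}(\mathcal{L})$.
   Context: For a complete lattice: $\Sigma,\Sigma'$ atoms and coatoms, $\Sigma[a]$ atoms below $a$, $\mathsf{Cl}(\omega)=\{\Sigma[a];a\in\omega\}$, $f^\circ(b):=\bigvee\{a;f(a)\le b\}$. For lattices $\mathcal{L}_1,\mathcal{L}_2$, $\Sigma'_\circledast$ is the set of $R\subsetneqq\Sigma_1\times\Sigma_2$ such that for every $(p_1,p_2)$, $\{q_1;(q_1,p_2)\in R\}\in\mathsf{Cl}(\Sigma_1'\cup\{1\})$ and $\{q_2;(p_1,q_2)\in R\}\in\mathsf{Cl}(\Sigma_2'\cup\{1\})$. $\mathbf{Chu}_{2_0}$: objects $(A,r,X)$, $A,X$ pointed sets, $r:A\times X\to\{0,1\}$ vanishing at base points; arrows $(f,g)$, pointed $f:A\to B$, $g:Y\to X$, $s(f(a),y)=r(a,g(y))$. $(A,r,X)^\perp=(X,\check r,A)$. $\mathsf{A}_1\otimes_C\mathsf{A}_2:=(A_1\wedge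 A_2,t,\mathbf{Chu}_{2_0}(\mathsf{A}_1,\mathsf{A}_2^\perp))$, with $A\wedge B=((A\setminus\{0_A\})\times(B\setminus\{0_B\}))\cup\{0_\sharp\}$, hom-set pointed by the constant arrow, $t((a_1,a_2),(f,g))=r_1(a_1,g(a_2))$. For any complete atomistic coatomistic lattice $\mathcal{L}$, $\mathcal{F}(\mathcal{L})=(\Sigma\cup\{0\},r,\Sigma'\cup\{1\})$ pointed by $0$ and $1$, with $r(p,x)=0\iff p\le x$. *)

theory Defs
  imports "HOL-Library.FuncSet"
begin

definition atom :: "'a::complete_lattice \<Rightarrow> bool" where
  "atom a \<longleftrightarrow> a \<noteq> bot \<and> (\<forall>b. b \<le> a \<longrightarrow> b = bot \<or> b = a)"

definition coatom :: "'a::complete_lattice \<Rightarrow> bool" where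
  "coatom a \<longleftrightarrow> a \<noteq> top \<and> (\<forall>b. a \<le> b \<longrightarrow> b = top \<or> b = a)"

definition atoms :: "'a::complete_lattice set" where
  "atoms = {a. atom a}"

definition coatoms :: "'a::complete_lattice set" where
  "coatoms = {a. coatom a}"

definition atoms_below :: "'a::complete_lattice \<Rightarrow> 'a set" where
  "atoms_below a = {p \<in> atoms. p \<le> a}"

definition Cl :: "'a::complete_lattice set \<Rightarrow> 'a set set" where
  "Cl \<omega> = atoms_below ` \<omega>"

definition atomistic :: "'a::complete_lattice itself \<Rightarrow> bool" where
  "atomistic _ \<longleftrightarrow> (\<forall>x::'a. x = Sup (atoms_below x))"

definition coatomistic :: "'a::complete_lattice itself \<Rightarrow> bool" where
  "coatomistic _ \<longleftrightarrow> (\<forall>x::'a. x = Inf {c \<in> coatoms. x \<le> c})"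

text \<open>\<open>\<Sigma>'_\<circledast>\<close> for lattices L1 (type 'a) and L2 (type 'b)\<close>
definition tensor_coatoms :: "('a::complete_lattice \<times> 'b::complete_lattice) set set" where
  "tensor_coatoms = {R. R \<subseteq> atoms \<times> atoms \<and> R \<noteq> atoms \<times> atoms \<and>
      (\<forall>p1\<in>atoms. \<forall>p2\<in>atoms.
         {q1. (q1, p2) \<in> R} \<in> Cl (coatoms \<union> {top}) \<and>
         {q2. (p1, q2) \<in> R} \<in> Cl (coatoms \<union> {top}))}"

text \<open>An object (A, a0, r, X, x0): pointed sets (A,a0), (X,x0) and r : A \<times> X \<rightarrow> {0,1},
  where the value 1 is encoded as True and 0 as False.\<close>
type_synonym ('a, 'x) chu = "'a set \<times> 'a \<times> ('a \<Rightarrow> 'x \<Rightarrow> bool) \<times> 'x set \<times> 'x"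

definition chu_obj :: "('a, 'x) chu \<Rightarrow> bool" where
  "chu_obj C = (case C of (A, a0, r, X, x0) \<Rightarrow>
     a0 \<in> A \<and> x0 \<in> X \<and> (\<forall>a\<in>A. \<not> r a x0) \<and> (\<forall>x\<in>X. \<not> r a0 x))"

definition chu_arrow :: "('a, 'x) chu \<Rightarrow> ('b, 'y) chu \<Rightarrow> ('a \<Rightarrow> 'b) \<Rightarrow> ('y \<Rightarrow> 'x) \<Rightarrow> bool" where
  "chu_arrow C D f g = (case C of (A, a0, r, X, x0) \<Rightarrow> case D of (B, b0, s, Y, y0) \<Rightarrow>
     f \<in> A \<rightarrow> B \<and> f a0 = b0 \<and> g \<in> Y \<rightarrow> X \<and> g y0 = x0 \<and>
     (\<forall>a\<in>A. \<forall>y\<in>Y. s (f a) y = r a (g y)))"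

definition chu_hom :: "('a, 'x) chu \<Rightarrow> ('b, 'y) chu \<Rightarrow> (('a \<Rightarrow> 'b) \<times> ('y \<Rightarrow> 'x)) set" where
  "chu_hom C D = (case C of (A, a0, r, X, x0) \<Rightarrow> case D of (B, b0, s, Y, y0) \<Rightarrow>
     {(f, g). chu_arrow C D f g \<and> f \<in> extensional A \<and> g \<in> extensional Y})"

definition chu_dual :: "('a, 'x) chu \<Rightarrow> ('x, 'a) chu" where
  "chu_dual C = (case C of (A, a0, r, X, x0) \<Rightarrow> (X, x0, \<lambda>x a. r a x, A, a0))"

definition chu_iso :: "('a, 'x) chu \<Rightarrow> ('b, 'y) chu \<Rightarrow> bool" where
  "chu_iso C D = (case C of (A, a0, r, X, x0) \<Rightarrow> case D of (B, b0, s, Y, y0) \<Rightarrow>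
     (\<exists>f g f' g'. chu_arrow C D f g \<and> chu_arrow D C f' g' \<and>
        (\<forall>a\<in>A. f' (f a) = a) \<and> (\<forall>b\<in>B. f (f' b) = b) \<and>
        (\<forall>x\<in>X. g (g' x) = x) \<and> (\<forall>y\<in>Y. g' (g y) = y)))"

text \<open>Smash product A \<and> B, with the new base point 0_\<sharp> represented by None\<close>
definition smash :: "'a set \<Rightarrow> 'a \<Rightarrow> 'b set \<Rightarrow> 'b \<Rightarrow> ('a \<times> 'b) option set" where
  "smash A a0 B b0 = Some ` ((A - {a0}) \<times> (B - {b0})) \<union> {None}"

text \<open>A1 \<otimes>_C A2 = (A1 \<and> A2, t, Chu(A1, A2^\<bottom>)), hom-set pointed by the constant arrow\<close>
definition chu_tensor :: "('a1, 'x1) chu \<Rightarrow> ('a2, 'x2) chu \<Rightarrow>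
    (('a1 \<times> 'a2) option, ('a1 \<Rightarrow> 'x2) \<times> ('a2 \<Rightarrow> 'x1)) chu" where
  "chu_tensor C1 C2 = (case C1 of (A1, a1, r1, X1, x1) \<Rightarrow> case C2 of (A2, a2, r2, X2, x2) \<Rightarrow>
     (smash A1 a1 A2 a2, None,
      (\<lambda>p (f, g). case p of None \<Rightarrow> False | Some (b1, b2) \<Rightarrow> r1 b1 (g b2)),
      chu_hom C1 (chu_dual C2),
      (\<lambda>b\<in>A1. x2, \<lambda>b\<in>A2. x1)))"

text \<open>\<open>\<F>(L) = (\<Sigma> \<union> {0}, r, \<Sigma>' \<union> {1})\<close>, r(p,x) = 0 iff p \<le> x\<close>
definition chuF :: "('a::complete_lattice, 'a) chu" where
  "chuF = (atoms \<union> {bot}, bot, \<lambda>p x. \<not> p \<le> x, coatoms \<union> {top}, top)"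

end

theory Submission
  imports Defs
begin

lemma atoms_set: "(atoms :: 'a set set) = {{x}|x. True}"
proof -
  have "atom (a::'a set) \<longleftrightarrow> (\<exists>x. a = {x})" for a
  proof
    assume h: "atom a"
    then obtain x where x: "x \<in> a" unfolding atom_def by auto
    with h have "{x} = a" unfolding atom_def by (metis bot_set_def empty_not_insert empty_subsetI insert_subset)
    thus "\<exists>x. a = {x}" by blast
  next
    assume "\<exists>x. a = {x}"
    then show "atom a" unfolding atom_def by (auto simp: subset_singleton_iff)
  qed
  thus ?thesis unfolding atoms_def by auto
qed

lemma coatoms_set: "(coatoms :: 'a set set) = {-{x}|x. True}"
proof -
  have "coatom (a::'a set) \<longleftrightarrow> (\<exists>x. a = -{x})" for a
  proof
    assume h: "coatom a"
    then obtain x where x: "x \<notin> a" unfolding coatom_def by auto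
    then have "a \<subseteq> -{x}" by auto
    moreover have "-{x} \<noteq> (UNIV::'a set)" by auto
    ultimately have "-{x} = a" using h unfolding coatom_def top_set_def by blast
    thus "\<exists>x. a = -{x}" by blast
  next
    assume "\<exists>x. a = -{x}"
    then obtain x where "a = -{x}" by blast
    moreover have "b = UNIV \<or> b = -{x}" if "-{x} \<subseteq> b" for b :: "'a set"
      using that by (cases "x \<in> b") auto
    ultimately show "coatom a" unfolding coatom_def top_set_def by auto
  qed
  thus ?thesis unfolding coatoms_def by auto
qed

lemma ab_co: "atoms_below (-{x} :: 'a set) = atoms - {{x}}"
  unfolding atoms_below_def atoms_set by auto

lemma ab_top: "atoms_below (UNIV :: 'a set) = atoms"
  unfolding atoms_below_def by auto

lemma co_in: "-{x} \<in> (coatoms :: 'a set set)" unfolding coatoms_set by auto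

lemma Cl_co: "atoms - {{x}} \<in> Cl (coatoms \<union> {top} :: 'a set set)"
  unfolding Cl_def using ab_co[of x] co_in[of x] by (metis UnI1 image_eqI)

lemma Cl_top: "(atoms :: 'a set set) \<in> Cl (coatoms \<union> {top} :: 'a set set)"
  unfolding Cl_def using ab_top by (metis UnI2 image_eqI singletonI top_set_def)


lemma no_iso:
  fixes D :: "('b, 'y) chu"
  assumes at: "atomistic TYPE('c::complete_lattice)"
    and iso: "chu_iso (chuF :: ('c, 'c) chu) D"
    and D: "D = (B, b0, s, Y, y0)"
    and y: "y1 \<in> Y" "y2 \<in> Y"
    and sub: "\<forall>b\<in>B. \<not> s b y1 \<longrightarrow> \<not> s b y2"
    and b: "b \<in> B" "s b y1" "\<not> s b y2"
    and b': "b' \<in> B" "s b' y2"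
  shows False
proof -
  let ?A = "atoms \<union> {bot} :: 'c set"
  let ?X = "coatoms \<union> {top} :: 'c set"
  from iso obtain f g f' g' where
    f: "f \<in> ?A \<rightarrow> B" and g: "g \<in> Y \<rightarrow> ?X"
    and fg: "\<forall>a\<in>?A. \<forall>y\<in>Y. s (f a) y = (\<not> a \<le> g y)"
    and f': "f' \<in> B \<rightarrow> ?A" and ff': "\<forall>b\<in>B. f (f' b) = b"
    unfolding chu_iso_def chuF_def D chu_arrow_def by auto
  define x1 where "x1 = g y1"
  define x2 where "x2 = g y2"
  have x1: "x1 \<in> ?X" and x2: "x2 \<in> ?X" using g y x1_def x2_def by auto
  have A: "f' b \<in> ?A" "f' b' \<in> ?A" using f' b b' by auto
  have "\<not> f' b \<le> x1" using fg A y b ff' x1_def by metis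
  moreover have "f' b \<le> x2" using fg A y b ff' x2_def by metis
  ultimately have ne: "x1 \<noteq> x2" by auto
  have "\<not> f' b' \<le> x2" using fg A y b' ff' x2_def by metis
  hence x2t: "x2 \<noteq> top" by auto
  have "atoms_below x1 \<subseteq> atoms_below x2"
  proof
    fix p assume p: "p \<in> atoms_below x1"
    hence pA: "p \<in> ?A" and "p \<le> x1" unfolding atoms_below_def by auto
    hence "\<not> s (f p) y1" using fg y x1_def by metis
    moreover have "f p \<in> B" using f pA by auto
    ultimately have "\<not> s (f p) y2" using sub by auto
    hence "p \<le> x2" using fg pA y x2_def by metis
    thus "p \<in> atoms_below x2" using p unfolding atoms_below_def by auto
  qed
  hence le: "x1 \<le> x2" using at unfolding atomistic_def by (metis Sup_subset_mono)
  have "x1 \<noteq> top" using le x2t by (metis top_le)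
  hence "coatom x1" using x1 unfolding coatoms_def by auto
  thus False using le ne x2t unfolding coatom_def by auto
qed


lemma atom_single: "(p :: 'a set) \<in> atoms \<longleftrightarrow> (\<exists>x. p = {x})"
  unfolding atoms_set by auto

theorem mainTheorem11:
  fixes r0 :: 'a
  assumes "\<exists>x y :: 'a. x \<noteq> y"
  defines "R \<equiv> (\<Union>r \<in> (atoms :: 'a set set). {r} \<times> (atoms - {r}))"
  defines "S \<equiv> R \<union> ({{r0}} \<times> (atoms :: 'a set set))"
  shows "R \<in> tensor_coatoms \<and> S \<in> tensor_coatoms \<and>
         R \<subset> S \<and> S \<subset> (atoms :: 'a set set) \<times> (atoms :: 'a set set) \<and>
         (atomistic TYPE('c::complete_lattice) \<and> coatomistic TYPE('c) \<longrightarrow>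
          \<not> chu_iso (chuF :: ('c, 'c) chu)
               (chu_tensor (chuF :: ('a set, 'a set) chu) (chuF :: ('a set, 'a set) chu)))"
proof -
  obtain x1 :: 'a where x1: "x1 \<noteq> r0" using assms(1) by metis
  have r0A: "{r0} \<in> (atoms :: 'a set set)" and x1A: "{x1} \<in> (atoms :: 'a set set)"
    by (auto simp: atom_single)
  have Rm: "(p, q) \<in> R \<longleftrightarrow> p \<in> atoms \<and> q \<in> atoms \<and> p \<noteq> q" for p q
    unfolding R_def by auto
  have Sm: "(p, q) \<in> S \<longleftrightarrow> p \<in> atoms \<and> q \<in> atoms \<and> (p \<noteq> q \<or> p = {r0})" for p q
    unfolding S_def using Rm r0A by auto
  have "({r0},{r0}) \<in> S - R" using Rm Sm r0A by auto
  moreover have "R \<subseteq> S" using Rm Sm by auto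
  ultimately have RS: "R \<subset> S" by blast
  have Sfull: "S \<subset> atoms \<times> atoms" using Sm x1A x1 by auto
  have Rt: "R \<in> tensor_coatoms"
    unfolding tensor_coatoms_def
  proof (intro CollectI conjI ballI)
    show "R \<subseteq> atoms \<times> atoms" using Rm by auto
    show "R \<noteq> atoms \<times> atoms" using Rm x1A by auto
    fix p1 p2 :: "'a set" assume p1: "p1 \<in> atoms" and p2: "p2 \<in> atoms"
    then obtain a b where ab: "p1 = {a}" "p2 = {b}" by (auto simp: atom_single)
    have "{q1. (q1, p2) \<in> R} = atoms - {{b}}" using Rm p2 ab by auto
    thus "{q1. (q1, p2) \<in> R} \<in> Cl (coatoms \<union> {top})" using Cl_co by metis
    have "{q2. (p1, q2) \<in> R} = atoms - {{a}}" using Rm p1 ab by auto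
    thus "{q2. (p1, q2) \<in> R} \<in> Cl (coatoms \<union> {top})" using Cl_co by metis
  qed
  have St: "S \<in> tensor_coatoms"
    unfolding tensor_coatoms_def
  proof (intro CollectI conjI ballI)
    show "S \<subseteq> atoms \<times> atoms" using Sm by auto
    show "S \<noteq> atoms \<times> atoms" using Sfull by auto
    fix p1 p2 :: "'a set" assume p1: "p1 \<in> atoms" and p2: "p2 \<in> atoms"
    then obtain a b where ab: "p1 = {a}" "p2 = {b}" by (auto simp: atom_single)
    have "{q1. (q1, p2) \<in> S} = (if b = r0 then atoms else atoms - {{b}})"
      using Sm p2 ab r0A by auto
    thus "{q1. (q1, p2) \<in> S} \<in> Cl (coatoms \<union> {top})" using Cl_co Cl_top by metis
    have "{q2. (p1, q2) \<in> S} = (if a = r0 then atoms else atoms - {{a}})"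
      using Sm p1 ab by auto
    thus "{q2. (p1, q2) \<in> S} \<in> Cl (coatoms \<union> {top})" using Cl_co Cl_top by metis
  qed
  have iso: "\<not> chu_iso (chuF :: ('c, 'c) chu)
               (chu_tensor (chuF :: ('a set, 'a set) chu) (chuF :: ('a set, 'a set) chu))"
    if at: "atomistic TYPE('c::complete_lattice)"
  proof
    assume h: "chu_iso (chuF :: ('c, 'c) chu)
               (chu_tensor (chuF :: ('a set, 'a set) chu) (chuF :: ('a set, 'a set) chu))"
    let ?A = "atoms \<union> {bot} :: 'a set set"
    let ?X = "coatoms \<union> {top} :: 'a set set"
    define B where "B = smash ?A bot ?A bot"
    define s where "s = (\<lambda>p (f::'a set \<Rightarrow> 'a set, g::'a set \<Rightarrow> 'a set). case p of None \<Rightarrow> False | Some (b1, b2) \<Rightarrow> \<not> b1 \<le> g b2)"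
    define Y :: "(('a set \<Rightarrow> 'a set) \<times> ('a set \<Rightarrow> 'a set)) set" where "Y = chu_hom (chuF :: ('a set, 'a set) chu) (chu_dual chuF)"
    have D: "chu_tensor (chuF :: ('a set, 'a set) chu) (chuF :: ('a set, 'a set) chu)
       = (B, None, s, Y, (\<lambda>b\<in>?A. top, \<lambda>b\<in>?A. top))"
      unfolding chu_tensor_def B_def s_def Y_def chuF_def prod.case by (rule refl)
    define F1 where "F1 = (\<lambda>b\<in>?A. if b = {} then UNIV else - b)"
    define F2 where "F2 = (\<lambda>b\<in>?A. if b = {} \<or> b = {r0} then UNIV else - b)"
    have Yc: "(F, F) \<in> Y" if F: "F \<in> extensional ?A" "F \<in> ?A \<rightarrow> ?X" "F {} = UNIV"
       "\<forall>a\<in>?A. \<forall>y\<in>?A. (\<not> y \<le> F a) = (\<not> a \<le> F y)" for F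
      unfolding Y_def chu_hom_def chu_dual_def chuF_def chu_arrow_def prod.case mem_Collect_eq
      using F unfolding bot_set_def top_set_def by blast
    have AA: "p \<in> ?A \<longleftrightarrow> p = {} \<or> (\<exists>x. p = {x})" for p :: "'a set"
      by (auto simp: atom_single)
    have sA: "{u} \<in> ?A" for u :: 'a by (auto simp: atom_single)
    have eA: "{} \<in> ?A" by (simp add: bot_set_def)
    have F1e: "F1 {} = UNIV" and F1s: "F1 {u} = -{u}" for u
      unfolding F1_def using sA eA by auto
    have F2e: "F2 {} = UNIV" and F2s: "F2 {u} = (if u = r0 then UNIV else -{u})" for u
      unfolding F2_def using sA eA by auto
    have AA': "p = {} \<or> (\<exists>x. p = {x})" if "p \<in> ?A" for p :: "'a set"
      using AA that by blast
    have y1: "(F1, F1) \<in> Y"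
    proof (rule Yc)
      show "F1 \<in> extensional ?A" unfolding F1_def by simp
      show "F1 \<in> ?A \<rightarrow> ?X"
      proof
        fix a assume "a \<in> ?A"
        then show "F1 a \<in> ?X" using AA' co_in F1e F1s by (metis UnI1 UnI2 insertI1 top_set_def)
      qed
      show "F1 {} = UNIV" by (rule F1e)
      show "\<forall>a\<in>?A. \<forall>y\<in>?A. (\<not> y \<le> F1 a) = (\<not> a \<le> F1 y)"
      proof (intro ballI)
        fix a y assume a: "a \<in> ?A" and y: "y \<in> ?A"
        show "(\<not> y \<le> F1 a) = (\<not> a \<le> F1 y)"
          using AA'[OF a] AA'[OF y] F1e F1s by auto
      qed
    qed
    have y2: "(F2, F2) \<in> Y"
    proof (rule Yc)
      show "F2 \<in> extensional ?A" unfolding F2_def by simp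
      show "F2 \<in> ?A \<rightarrow> ?X"
      proof
        fix a assume "a \<in> ?A"
        then show "F2 a \<in> ?X" using AA' co_in F2e F2s by (metis UnI1 UnI2 insertI1 top_set_def)
      qed
      show "F2 {} = UNIV" by (rule F2e)
      show "\<forall>a\<in>?A. \<forall>y\<in>?A. (\<not> y \<le> F2 a) = (\<not> a \<le> F2 y)"
      proof (intro ballI)
        fix a y assume a: "a \<in> ?A" and y: "y \<in> ?A"
        show "(\<not> y \<le> F2 a) = (\<not> a \<le> F2 y)"
          using AA'[OF a] AA'[OF y] F2e F2s by auto
      qed
    qed
    have Bm: "Some (p, q) \<in> B" if "p \<in> atoms" "q \<in> atoms" for p q
      using that unfolding B_def smash_def by (auto simp: atom_single)
    show False
    proof (rule no_iso[OF at h D y1 y2])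
      show "\<forall>b\<in>B. \<not> s b (F1, F1) \<longrightarrow> \<not> s b (F2, F2)"
        unfolding s_def F1_def F2_def B_def smash_def by auto
      show "Some ({r0}, {r0}) \<in> B" using Bm r0A by auto
      show "s (Some ({r0}, {r0})) (F1, F1)" unfolding s_def F1_def using r0A by auto
      show "\<not> s (Some ({r0}, {r0})) (F2, F2)" unfolding s_def F2_def using r0A by auto
      show "Some ({x1}, {x1}) \<in> B" using Bm x1A by auto
      show "s (Some ({x1}, {x1})) (F2, F2)" unfolding s_def F2_def using x1A x1 by auto
    qed
  qed
  show ?thesis using Rt St RS Sfull iso by blast
qed

end
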